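(* There exists a function $\lambda:(0,\infty)^2\to(0,\infty)$ such that for every non-constant $t\in\mathfrak{T}_1$ with $\Re t>0$ on $\mathbb{T}$ and each choice of sign, $$\|\Psi^{\pm}t\|_\infty\le\lambda(\rho(t),\tau(t))\,n(t)^{\pi/2}.$$
   Context: $\mathbb{T}=\mathbb{R}/\mathbb{Z}$, $e_j(x)=e^{2\pi i jx}$. $\mathfrak{T}_1$: trigonometric polynomials on $\mathbb{T}$; $n^+(t)=\max\mathrm{freq}(t)$, $n^-(t)=-\min\mathrm{freq}(t)$, $n(t)=\max\{n^+(t),n^-(t)\}$; $\|\widehat t\|_1=\sum_j|\widehat t(j)|$. For $\Re t>0$: $\rho(t)=\min\{1,\min\Re t/(2e\|\widehat t\|_1)\}$, $\tau(t)=\max\{\log(\|t\|_\infty+\min\Re t/2),\ \pi/2+|\log(\min\Re t/2)|\}$. For $t$ with $\Re t>0$, $Lt=\log t$ (principal logarithm), $A_\infty^{\pm}g=\tfrac12\widehat g(0)+\sum_{j\ge1}\widehat g(\pm j)e_{\pm j}$, and $\Psi^{\pm}t=\exp(A_\infty^{\pm}(Lt))$. *)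

theory Defs
  imports "HOL-Analysis.Analysis"
begin

text \<open>Trigonometric polynomials on T = R/Z are represented by their finitely supported
  coefficient functions c :: int => complex; the polynomial is the 1-periodic function
  x |-> sum_j c j * e_j x on the reals.\<close>

definition ee :: "int \<Rightarrow> real \<Rightarrow> complex" where
  "ee j x = exp (2 * pi * \<i> * of_int j * of_real x)"

definition supp :: "(int \<Rightarrow> complex) \<Rightarrow> int set" where
  "supp c = {j. c j \<noteq> 0}"

definition is_trig_poly :: "(int \<Rightarrow> complex) \<Rightarrow> bool" where
  "is_trig_poly c \<longleftrightarrow> finite (supp c)"

definition trig_eval :: "(int \<Rightarrow> complex) \<Rightarrow> real \<Rightarrow> complex" where
  "trig_eval c x = (\<Sum>j\<in>supp c. c j * ee j x)"

definition nonconstant :: "(int \<Rightarrow> complex) \<Rightarrow> bool" where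
  "nonconstant c \<longleftrightarrow> (\<exists>j. j \<noteq> 0 \<and> c j \<noteq> 0)"

definition n_plus :: "(int \<Rightarrow> complex) \<Rightarrow> int" where
  "n_plus c = Max (supp c)"

definition n_minus :: "(int \<Rightarrow> complex) \<Rightarrow> int" where
  "n_minus c = - Min (supp c)"

definition n_deg :: "(int \<Rightarrow> complex) \<Rightarrow> int" where
  "n_deg c = max (n_plus c) (n_minus c)"

definition coeff_l1 :: "(int \<Rightarrow> complex) \<Rightarrow> real" where
  "coeff_l1 c = (\<Sum>j\<in>supp c. norm (c j))"

text \<open>Sup norm over the torus (functions are 1-periodic, so [0,1] suffices).\<close>
definition sup_norm :: "(real \<Rightarrow> complex) \<Rightarrow> real" where
  "sup_norm f = (SUP x\<in>{0..1}. norm (f x))"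

definition min_re :: "(real \<Rightarrow> complex) \<Rightarrow> real" where
  "min_re f = (INF x\<in>{0..1}. Re (f x))"

definition rho :: "(int \<Rightarrow> complex) \<Rightarrow> real" where
  "rho c = min 1 (min_re (trig_eval c) / (2 * exp 1 * coeff_l1 c))"

definition tau :: "(int \<Rightarrow> complex) \<Rightarrow> real" where
  "tau c = max (ln (sup_norm (trig_eval c) + min_re (trig_eval c) / 2))
               (pi / 2 + \<bar>ln (min_re (trig_eval c) / 2)\<bar>)"

definition fcoeff :: "(real \<Rightarrow> complex) \<Rightarrow> int \<Rightarrow> complex" where
  "fcoeff g j = integral {0..1} (\<lambda>x. g x * ee (- j) x)"

text \<open>A_infinity^{+} (s = True) and A_infinity^{-} (s = False).\<close>
definition A_inf :: "bool \<Rightarrow> (real \<Rightarrow> complex) \<Rightarrow> real \<Rightarrow> complex" where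
  "A_inf s g x = fcoeff g 0 / 2 +
     (\<Sum>k. let j = (if s then 1 else -1) * int (Suc k) in fcoeff g j * ee j x)"

definition Psi :: "bool \<Rightarrow> (int \<Rightarrow> complex) \<Rightarrow> real \<Rightarrow> complex" where
  "Psi s c = (\<lambda>x. exp (A_inf s (\<lambda>y. Ln (trig_eval c y)) x))"

end

theory Submission
  imports Defs
begin

lemma jordan:
  fixes x :: real assumes "0 \<le> x" "x \<le> pi/2"
  shows "2 * x / pi \<le> sin x"
proof -
  have cv: "convex_on {0..pi/2} (\<lambda>x. - sin x)"
    by (rule f''_ge0_imp_convex[where f'="\<lambda>x. - cos x" and f''="\<lambda>x. sin x"])
       (auto intro!: derivative_eq_intros sin_ge_zero)
  from convex_onD_Icc'[OF cv, of x] assms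
  have "- sin x \<le> (- sin (pi/2) - - sin 0) / (pi/2 - 0) * (x - 0) + - sin 0" by simp
  then show ?thesis by (simp add: field_simps)
qed

lemma jordan2:
  fixes a :: real assumes "0 \<le> a" "a \<le> 1/2"
  shows "2 * a \<le> sin (pi * a)"
  using jordan[of "pi*a"] assms by (simp add: field_simps)

lemma ee_cis: "ee j x = cis (2 * pi * of_int j * x)"
  by (simp add: ee_def cis_conv_exp mult_ac)

lemma ee_add: "ee j (x + y) = ee j x * ee j y"
  by (simp add: ee_def distrib_left distrib_right exp_add[symmetric] algebra_simps)

lemma ee_0 [simp]: "ee j 0 = 1" by (simp add: ee_def)

lemma ee_int [simp]: "ee j (of_int k) = 1"
proof -
  have "ee j (of_int k) = cis (2 * pi * of_int (j*k))" by (simp add: ee_cis mult_ac)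
  also have "\<dots> = 1" by (rule cis_multiple_2pi) simp
  finally show ?thesis .
qed

lemma ee_1 [simp]: "ee j 1 = 1" using ee_int[of j 1] by simp

lemma ee_period: "ee j (x + of_int k) = ee j x" by (simp add: ee_add)

lemma norm_ee [simp]: "norm (ee j x) = 1" by (simp add: ee_cis)

lemma ee_neg_mult: "ee (- j) y * ee j x = ee j (x - y)"
  by (simp add: ee_def exp_add[symmetric] algebra_simps)

lemma ee_mult_nat: "ee (s * int k) v = ee s v ^ k"
proof -
  have "ee (s * int k) v = exp (of_nat k * (2 * pi * \<i> * of_int s * of_real v))"
    by (simp add: ee_def mult_ac)
  also have "\<dots> = ee s v ^ k" by (simp add: exp_of_nat_mult ee_def)
  finally show ?thesis .
qed

lemma ee_deriv: "(ee j has_vector_derivative (2 * pi * \<i> * of_int j * ee j x)) (at x within S)"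
proof -
  have "((\<lambda>z. exp (2 * pi * \<i> * of_int j * z)) has_field_derivative
          (2 * pi * \<i> * of_int j * exp (2 * pi * \<i> * of_int j * of_real x))) (at (of_real x))"
    by (auto intro!: derivative_eq_intros)
  from has_vector_derivative_real_field[OF this] show ?thesis by (simp add: ee_def[abs_def])
qed

lemma continuous_ee [continuous_intros]: "continuous_on S (ee j)"
  unfolding ee_def by (intro continuous_intros)


definition TT :: "(int \<Rightarrow> complex) \<Rightarrow> complex \<Rightarrow> complex" where
  "TT c z = (\<Sum>j\<in>supp c. c j * exp (2 * pi * \<i> * of_int j * z))"
definition TT1 :: "(int \<Rightarrow> complex) \<Rightarrow> complex \<Rightarrow> complex" where
  "TT1 c z = (\<Sum>j\<in>supp c. c j * (2 * pi * \<i> * of_int j) * exp (2 * pi * \<i> * of_int j * z))"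
definition TT2 :: "(int \<Rightarrow> complex) \<Rightarrow> complex \<Rightarrow> complex" where
  "TT2 c z = (\<Sum>j\<in>supp c. c j * (2 * pi * \<i> * of_int j)^2 * exp (2 * pi * \<i> * of_int j * z))"

lemma TT_deriv: "(TT c has_field_derivative TT1 c z) (at z)"
  unfolding TT_def TT1_def
  by (auto intro!: derivative_eq_intros sum.cong simp: mult_ac)

lemma TT1_deriv: "(TT1 c has_field_derivative TT2 c z) (at z)"
  unfolding TT2_def TT1_def
  by (auto intro!: derivative_eq_intros sum.cong simp: mult_ac power2_eq_square)

lemma trig_eval_TT: "trig_eval c x = TT c (of_real x)"
  by (simp add: trig_eval_def TT_def ee_def)

lemma TT_real: "TT c (of_real x) = (\<Sum>j\<in>supp c. c j * ee j x)"
  by (simp add: TT_def ee_def)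
lemma TT1_real: "TT1 c (of_real x) = (\<Sum>j\<in>supp c. c j * (2 * pi * \<i> * of_int j) * ee j x)"
  by (simp add: TT1_def ee_def)
lemma TT2_real: "TT2 c (of_real x) = (\<Sum>j\<in>supp c. c j * (2 * pi * \<i> * of_int j)^2 * ee j x)"
  by (simp add: TT2_def ee_def)

lemma TT_period: "TT c (of_real (x + of_int k)) = TT c (of_real x)"
  by (simp only: TT_real ee_period)
lemma TT1_period: "TT1 c (of_real (x + of_int k)) = TT1 c (of_real x)"
  by (simp only: TT1_real ee_period)
lemma TT2_period: "TT2 c (of_real (x + of_int k)) = TT2 c (of_real x)"
  by (simp only: TT2_real ee_period)

lemma continuous_TT [continuous_intros]: "continuous_on S (TT c)"
  unfolding TT_def by (intro continuous_intros)
lemma continuous_TT1 [continuous_intros]: "continuous_on S (TT1 c)"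
  unfolding TT1_def by (intro continuous_intros)
lemma continuous_TT2 [continuous_intros]: "continuous_on S (TT2 c)"
  unfolding TT2_def by (intro continuous_intros)


locale tp =
  fixes c :: "int \<Rightarrow> complex"
  assumes fin: "finite (supp c)" and nc: "nonconstant c"
    and pos: "\<And>x. Re (trig_eval c x) > 0"
begin

definition "g x = Ln (TT c (of_real x))"
definition "g1 x = TT1 c (of_real x) / TT c (of_real x)"
definition "g2 x = (TT2 c (of_real x) * TT c (of_real x) - TT1 c (of_real x) * TT1 c (of_real x))
                    / (TT c (of_real x) * TT c (of_real x))"
definition "m = min_re (trig_eval c)"
definition "M = sup_norm (trig_eval c)"
definition "n = n_deg c"
definition "l1 = coeff_l1 c"

lemma posT: "Re (TT c (of_real x)) > 0"
  using pos[of x] by (simp add: trig_eval_TT)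

lemma TT_nz: "TT c (of_real x) \<noteq> 0"
  using posT[of x] by auto

lemma TT_notin: "TT c (of_real x) \<notin> \<real>\<^sub>\<le>\<^sub>0"
  using posT[of x] by (auto simp: complex_nonpos_Reals_iff)

lemma g_deriv: "(g has_vector_derivative g1 x) (at x within S)"
proof -
  have "((\<lambda>z. Ln (TT c z)) has_field_derivative (inverse (TT c (of_real x)) * TT1 c (of_real x))) (at (of_real x))"
    by (rule DERIV_chain2[OF has_field_derivative_Ln[OF TT_notin] TT_deriv])
  from has_vector_derivative_real_field[OF this]
  show ?thesis by (simp add: g_def[abs_def] g1_def field_simps TT_nz)
qed

lemma g1_deriv: "(g1 has_vector_derivative g2 x) (at x within S)"
proof -
  have "((\<lambda>z. TT1 c z / TT c z) has_field_derivative g2 x) (at (of_real x))"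
    unfolding g2_def by (rule DERIV_divide[OF TT1_deriv TT_deriv TT_nz])
  from has_vector_derivative_real_field[OF this]
  show ?thesis by (simp add: g1_def[abs_def])
qed

lemma cont_g: "continuous_on S g"
  by (rule continuous_at_imp_continuous_on) (auto intro: has_vector_derivative_continuous[OF g_deriv])
lemma cont_g1: "continuous_on S g1"
  by (rule continuous_at_imp_continuous_on) (auto intro: has_vector_derivative_continuous[OF g1_deriv])
lemma cont_g2: "continuous_on S g2"
  unfolding g2_def
  by (intro continuous_intros continuous_on_compose2[OF continuous_TT continuous_on_of_real]
      continuous_on_compose2[OF continuous_TT1 continuous_on_of_real]
      continuous_on_compose2[OF continuous_TT2 continuous_on_of_real]) (auto simp: TT_nz)

lemma g_period: "g (x + of_int k) = g x" by (simp only: g_def TT_period)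
lemma g1_period: "g1 (x + of_int k) = g1 x" by (simp only: g1_def TT_period TT1_period)
lemma g2_period: "g2 (x + of_int k) = g2 x" by (simp only: g2_def TT_period TT1_period TT2_period)

lemma frac_reduce: "\<exists>y\<in>{0..1}. \<exists>k. (x::real) = y + of_int k"
proof -
  have "x = frac x + of_int \<lfloor>x\<rfloor>" by (simp add: frac_def)
  moreover have "frac x \<in> {0..1}" using frac_lt_1[of x] frac_ge_0[of x] by auto
  ultimately show ?thesis by blast
qed

lemma cont_Ret: "continuous_on S (\<lambda>x. Re (trig_eval c x))"
  unfolding trig_eval_TT
  by (intro continuous_intros continuous_on_compose2[OF continuous_TT continuous_on_of_real]) auto
lemma cont_nt: "continuous_on S (\<lambda>x. norm (trig_eval c x))"
  unfolding trig_eval_TT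
  by (intro continuous_intros continuous_on_compose2[OF continuous_TT continuous_on_of_real]) auto

lemma m_le: "m \<le> Re (trig_eval c x)"
proof -
  obtain y k where y: "y \<in> {0..1}" "x = y + of_int k" using frac_reduce by blast
  have "bounded ((\<lambda>x. Re (trig_eval c x)) ` {0..1})"
    by (intro compact_imp_bounded compact_continuous_image cont_Ret) auto
  then have "bdd_below ((\<lambda>x. Re (trig_eval c x)) ` {0..1})" by (rule bounded_imp_bdd_below)
  then have "m \<le> Re (trig_eval c y)" unfolding m_def min_re_def using y by (intro cINF_lower) auto
  also have "trig_eval c y = trig_eval c x" unfolding y(2) trig_eval_TT TT_period ..
  finally show ?thesis .
qed

lemma m_pos: "m > 0"
proof -
  obtain x0 where x0: "x0 \<in> {0..1::real}" "\<And>y. y \<in> {0..1} \<Longrightarrow> Re (trig_eval c x0) \<le> Re (trig_eval c y)"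
    using continuous_attains_inf[OF _ _ cont_Ret, of "{0..1}"] by auto
  have "Re (trig_eval c x0) \<le> m" unfolding m_def min_re_def
    by (rule cINF_greatest) (use x0 in auto)
  with pos[of x0] show ?thesis by linarith
qed

lemma M_ge: "norm (trig_eval c x) \<le> M"
proof -
  obtain y k where y: "y \<in> {0..1}" "x = y + of_int k" using frac_reduce by blast
  have "bounded ((\<lambda>x. norm (trig_eval c x)) ` {0..1})"
    by (intro compact_imp_bounded compact_continuous_image cont_nt) auto
  then have "bdd_above ((\<lambda>x. norm (trig_eval c x)) ` {0..1})" by (rule bounded_imp_bdd_above)
  then have "norm (trig_eval c y) \<le> M" unfolding M_def sup_norm_def using y by (intro cSUP_upper) auto
  also have "trig_eval c y = trig_eval c x" unfolding y(2) trig_eval_TT TT_period ..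
  finally show "norm (trig_eval c x) \<le> M" using y by simp
qed

lemma M_pos: "M > 0"
proof -
  have "0 < Re (trig_eval c 0)" by (rule pos)
  also have "\<dots> \<le> norm (trig_eval c 0)" by (rule complex_Re_le_cmod)
  also have "\<dots> \<le> M" by (rule M_ge)
  finally show ?thesis .
qed

lemma supp_ne: "supp c \<noteq> {}"
  using nc by (auto simp: nonconstant_def supp_def)

lemma abs_le_n: "j \<in> supp c \<Longrightarrow> \<bar>j\<bar> \<le> n"
proof -
  assume j: "j \<in> supp c"
  have "j \<le> Max (supp c)" "Min (supp c) \<le> j" using j fin by auto
  then show ?thesis by (auto simp: n_def n_deg_def n_plus_def n_minus_def)
qed

lemma n_ge1: "n \<ge> 1"
proof -
  obtain j where "j \<noteq> 0" "c j \<noteq> 0" using nc by (auto simp: nonconstant_def)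
  then have "j \<in> supp c" by (simp add: supp_def)
  from abs_le_n[OF this] \<open>j \<noteq> 0\<close> show ?thesis by linarith
qed

lemma l1_pos: "l1 > 0"
proof -
  obtain j where "j \<in> supp c" using supp_ne by blast
  then have "norm (c j) > 0" "norm (c j) \<le> l1"
    unfolding l1_def coeff_l1_def using fin by (auto simp: supp_def intro!: member_le_sum)
  then show ?thesis by linarith
qed

lemma TT1_bound: "norm (TT1 c (of_real x)) \<le> 2 * pi * n * l1"
proof -
  have "norm (TT1 c (of_real x)) \<le> (\<Sum>j\<in>supp c. norm (c j * (2 * pi * \<i> * of_int j) * ee j x))"
    unfolding TT1_real by (rule norm_sum)
  also have "\<dots> \<le> (\<Sum>j\<in>supp c. norm (c j) * (2 * pi * n))"
  proof (rule sum_mono)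
    fix j assume j: "j \<in> supp c"
    have "norm (c j * (2 * pi * \<i> * of_int j) * ee j x) = norm (c j) * (2 * pi * \<bar>of_int j\<bar>)"
      by (simp add: norm_mult)
    also have "\<dots> \<le> norm (c j) * (2 * pi * n)"
      using abs_le_n[OF j] by (intro mult_left_mono) auto
    finally show "norm (c j * (2 * pi * \<i> * of_int j) * ee j x) \<le> norm (c j) * (2 * pi * n)" .
  qed
  also have "\<dots> = (\<Sum>j\<in>supp c. norm (c j)) * (2 * pi * n)" by (rule sum_distrib_right[symmetric])
  also have "\<dots> = 2 * pi * n * l1" by (simp add: l1_def coeff_l1_def)
  finally show ?thesis .
qed

lemma g1_bound: "norm (g1 x) \<le> 2 * pi * n * l1 / m"
proof -
  have "m \<le> Re (TT c (of_real x))" using m_le[of x] by (simp add: trig_eval_TT)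
  also have "\<dots> \<le> norm (TT c (of_real x))" by (rule complex_Re_le_cmod)
  finally have mm: "m \<le> norm (TT c (of_real x))" .
  have "norm (g1 x) = norm (TT1 c (of_real x)) / norm (TT c (of_real x))" by (simp add: g1_def norm_divide)
  also have "\<dots> \<le> 2 * pi * n * l1 / m"
    by (rule frac_le) (use TT1_bound mm m_pos n_ge1 l1_pos in auto)
  finally show ?thesis .
qed

end


lemma tp_lip:
  assumes "tp c"
  shows "norm (tp.g c x - tp.g c y) \<le> (2 * pi * tp.n c * tp.l1 c / tp.m c) * \<bar>x - y\<bar>"
proof -
  interpret tp c by fact
  have "norm (g x - g y) \<le> (2 * pi * n * l1 / m) * norm (x - y)"
  proof (rule differentiable_bound[where S=UNIV and f'="\<lambda>x h. h *\<^sub>R g1 x"])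
    fix z :: real
    show "(g has_derivative (\<lambda>h. h *\<^sub>R g1 z)) (at z within UNIV)"
      using g_deriv[of z] by (simp add: has_vector_derivative_def)
    show "onorm (\<lambda>h. h *\<^sub>R g1 z) \<le> 2 * pi * n * l1 / m"
      using onorm_scaleR_left[of "\<lambda>h::real. h" "g1 z"] g1_bound[of z]
      by (simp add: onorm_id bounded_linear_ident)
  qed auto
  then show ?thesis by simp
qed

subsection \<open>Fourier coefficients\<close>

lemma integral_ee: "j \<noteq> 0 \<Longrightarrow> integral {0..1} (ee j) = 0"
proof -
  assume j: "j \<noteq> 0"
  define a where "a = 2 * pi * \<i> * of_int j"
  have a: "a \<noteq> 0" using j by (simp add: a_def)
  have e: "a * ee j y * inverse a = ee j y" for y using a by simp
  have "((\<lambda>y. ee j y * inverse a) has_vector_derivative ee j y) (at y within {0..1})" for y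
    using has_vector_derivative_mult_left[OF ee_deriv[of j y "{0..1}"], of "inverse a"]
    unfolding a_def[symmetric] e .
  from fundamental_theorem_of_calculus[OF _ this] have "(ee j has_integral (ee j 1 * inverse a - ee j 0 * inverse a)) {0..1}"
    by simp
  then have "(ee j has_integral 0) {0..1}" by simp
  then show ?thesis by (rule integral_unique)
qed

lemma fcoeff_deriv:
  fixes f f' :: "real \<Rightarrow> complex"
  assumes d: "\<And>x. (f has_vector_derivative f' x) (at x)" and c: "continuous_on {0..1} f'"
    and p: "f 1 = f 0"
  shows "fcoeff f' j = 2 * pi * \<i> * of_int j * fcoeff f j"
proof -
  have cf: "continuous_on {0..1} f"
    by (rule continuous_at_imp_continuous_on) (auto intro: has_vector_derivative_continuous[OF d])
  let ?a = "2 * pi * \<i> * of_int (-j) :: complex"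
  have D: "((\<lambda>y. f y * ee (-j) y) has_vector_derivative (f y * (?a * ee (-j) y) + f' y * ee (-j) y))
       (at y within {0..1})" for y
    using has_vector_derivative_mult[OF has_vector_derivative_at_within[OF d] ee_deriv[of "-j" y "{0..1}"]] .
  from fundamental_theorem_of_calculus[OF _ D]
  have I: "((\<lambda>y. f y * (?a * ee (-j) y) + f' y * ee (-j) y) has_integral 0) {0..1}" using p by simp
  have I1: "((\<lambda>y. f' y * ee (-j) y) has_integral fcoeff f' j) {0..1}"
    unfolding fcoeff_def by (intro integrable_integral integrable_continuous_interval continuous_intros c)
  have I2': "((\<lambda>y. ?a * (f y * ee (-j) y)) has_integral ?a * fcoeff f j) {0..1}"
    unfolding fcoeff_def
    by (intro has_integral_mult_right integrable_integral integrable_continuous_interval continuous_intros cf)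
  have I2: "((\<lambda>y. f y * (?a * ee (-j) y)) has_integral ?a * fcoeff f j) {0..1}"
    by (rule has_integral_eq[OF _ I2']) (simp only: mult.left_commute)
  from has_integral_unique[OF I has_integral_add[OF I2 I1]]
  have "?a * fcoeff f j + fcoeff f' j = 0" by simp
  then show ?thesis by (simp add: eq_neg_iff_add_eq_0[symmetric])
qed

lemma int01_bound:
  fixes f :: "real \<Rightarrow> complex"
  assumes c: "continuous_on {0..1} f" and B: "\<And>x. x \<in> {0..1} \<Longrightarrow> norm (f x) \<le> B"
  shows "norm (integral {0..1} f) \<le> B"
proof -
  have I: "(f has_integral integral {0..1} f) (cbox 0 1)"
    unfolding cbox_interval by (intro integrable_integral integrable_continuous_interval c)
  have "0 \<le> norm (f 0)" by simp
  also have "\<dots> \<le> B" by (rule B) simp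
  finally have "0 \<le> B" .
  from has_integral_bound[OF this I] B show ?thesis by simp
qed

lemma fcoeff_bound:
  fixes f :: "real \<Rightarrow> complex"
  assumes c: "continuous_on {0..1} f" and B: "\<And>x. x \<in> {0..1} \<Longrightarrow> norm (f x) \<le> B"
  shows "norm (fcoeff f j) \<le> B"
  unfolding fcoeff_def
  by (rule int01_bound) (auto intro!: continuous_intros c simp: norm_mult B)

lemma continuous_on_ee_comp [continuous_intros]:
  "continuous_on S f \<Longrightarrow> continuous_on S (\<lambda>y. ee j (f y))"
  unfolding ee_def by (intro continuous_intros)

definition WW :: "real \<Rightarrow> int \<Rightarrow> real \<Rightarrow> real \<Rightarrow> complex" where
  "WW r s x y = of_real r * ee s (x - y)"

lemma norm_WW: "0 \<le> r \<Longrightarrow> norm (WW r s x y) = r"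
  by (simp add: WW_def norm_mult)

lemma WW_ne1: "0 \<le> r \<Longrightarrow> r < 1 \<Longrightarrow> WW r s x y \<noteq> 1"
  using norm_WW[of r s x y] by auto

lemma norm_1_WW: "0 \<le> r \<Longrightarrow> 1 - r \<le> norm (1 - WW r s x y)"
  using norm_triangle_ineq2[of 1 "WW r s x y"] norm_WW[of r s x y] by simp

lemma cont_WW [continuous_intros]: "continuous_on S (WW r s x)"
  unfolding WW_def[abs_def] by (intro continuous_intros)

lemma geo_suc:
  fixes w :: complex assumes "w \<noteq> 1"
  shows "(\<Sum>k<N. w ^ Suc k) = w / (1 - w) - w * w ^ N / (1 - w)"
proof -
  have "(\<Sum>k<N. w ^ Suc k) = w * (\<Sum>k<N. w ^ k)"
    by (simp add: sum_distrib_left)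
  also have "(\<Sum>k<N. w ^ k) = (1 - w ^ N) / (1 - w)"
    using assms by (simp add: sum_gp_strict)
  finally show ?thesis using assms by (simp add: diff_divide_distrib right_diff_distrib times_divide_eq_right)
qed

lemma abel_sums:
  fixes g :: "real \<Rightarrow> complex"
  assumes cg: "continuous_on {0..1} g" and r: "0 \<le> r" "r < 1"
  shows "(\<lambda>k. fcoeff g (s * int (Suc k)) * ee (s * int (Suc k)) x * of_real r ^ Suc k) sums
         integral {0..1} (\<lambda>y. g y * (WW r s x y / (1 - WW r s x y)))"
proof -
  let ?W = "WW r s x"
  have ne: "?W y \<noteq> 1" for y using WW_ne1[OF r] .
  have ne': "1 - ?W y \<noteq> 0" for y using ne[of y] by simp
  have T: "fcoeff g (s * int (Suc k)) * ee (s * int (Suc k)) x * of_real r ^ Suc k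
        = integral {0..1} (\<lambda>y. g y * ?W y ^ Suc k)" for k
  proof -
    let ?j = "s * int (Suc k)"
    have "fcoeff g ?j * ee ?j x * of_real r ^ Suc k
        = integral {0..1} (\<lambda>y. g y * ee (-?j) y) * (ee ?j x * of_real r ^ Suc k)"
      by (simp only: fcoeff_def mult.assoc)
    also have "\<dots> = integral {0..1} (\<lambda>y. g y * ee (-?j) y * (ee ?j x * of_real r ^ Suc k))"
      by (rule integral_mult_left[symmetric])
    also have "\<dots> = integral {0..1} (\<lambda>y. g y * ?W y ^ Suc k)"
    proof (rule integral_cong)
      fix y
      have "ee (-?j) y * ee ?j x = ee s (x - y) ^ Suc k"
        unfolding ee_neg_mult by (rule ee_mult_nat)
      then show "g y * ee (-?j) y * (ee ?j x * of_real r ^ Suc k) = g y * ?W y ^ Suc k"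
        by (simp add: WW_def power_mult_distrib mult_ac)
    qed
    finally show ?thesis .
  qed
  obtain Bg where Bg: "\<And>y. y \<in> {0..1} \<Longrightarrow> norm (g y) \<le> Bg"
    using compact_imp_bounded[OF compact_continuous_image[OF cg compact_Icc]]
    unfolding bounded_iff by (metis atLeastAtMost_iff image_eqI)
  have "norm (g 0) \<le> Bg" by (rule Bg) simp
  then have Bg0: "0 \<le> Bg" by (rule order.trans[OF norm_ge_zero])
  let ?I = "integral {0..1} (\<lambda>y. g y * (?W y / (1 - ?W y)))"
  let ?E = "\<lambda>N. integral {0..1} (\<lambda>y. g y * (?W y * ?W y ^ N / (1 - ?W y)))"
  have P: "(\<Sum>k<N. fcoeff g (s * int (Suc k)) * ee (s * int (Suc k)) x * of_real r ^ Suc k) = ?I - ?E N" for N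
  proof -
    have "(\<Sum>k<N. fcoeff g (s * int (Suc k)) * ee (s * int (Suc k)) x * of_real r ^ Suc k)
        = (\<Sum>k<N. integral {0..1} (\<lambda>y. g y * ?W y ^ Suc k))" by (simp only: T)
    also have "\<dots> = integral {0..1} (\<lambda>y. \<Sum>k<N. g y * ?W y ^ Suc k)"
      by (rule integral_sum[symmetric]) (auto intro!: integrable_continuous_interval continuous_intros cg)
    also have "\<dots> = integral {0..1} (\<lambda>y. g y * (?W y / (1 - ?W y)) - g y * (?W y * ?W y ^ N / (1 - ?W y)))"
    proof (rule integral_cong)
      fix y
      have "(\<Sum>k<N. ?W y ^ Suc k) = ?W y / (1 - ?W y) - ?W y * ?W y ^ N / (1 - ?W y)"
        by (rule geo_suc[OF ne])
      then show "(\<Sum>k<N. g y * ?W y ^ Suc k) = g y * (?W y / (1 - ?W y)) - g y * (?W y * ?W y ^ N / (1 - ?W y))"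
        by (simp add: sum_distrib_left[symmetric] right_diff_distrib)
    qed
    also have "\<dots> = ?I - ?E N"
      by (rule integral_diff) (auto intro!: integrable_continuous_interval continuous_intros cg simp: ne' ne)
    finally show ?thesis .
  qed
  have E0: "?E \<longlonglongrightarrow> 0"
  proof (rule Lim_null_comparison)
    show "\<forall>\<^sub>F N in sequentially. norm (?E N) \<le> Bg * r ^ N / (1 - r)"
    proof (rule always_eventually, rule allI)
      fix N
      show "norm (?E N) \<le> Bg * r ^ N / (1 - r)"
      proof (rule int01_bound)
        show "continuous_on {0..1} (\<lambda>y. g y * (?W y * ?W y ^ N / (1 - ?W y)))"
          by (auto intro!: continuous_intros cg simp: ne' ne)
        fix y :: real assume y: "y \<in> {0..1}"
        have "norm (g y * (?W y * ?W y ^ N / (1 - ?W y))) = norm (g y) * (r * r ^ N / norm (1 - ?W y))"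
          by (simp add: norm_mult norm_divide norm_power norm_WW[OF r(1)])
        also have "\<dots> \<le> Bg * (1 * r ^ N / (1 - r))"
          using r Bg[OF y] Bg0 norm_1_WW[OF r(1), of s x y]
          by (intro mult_mono frac_le mult_right_mono) auto
        finally show "norm (g y * (?W y * ?W y ^ N / (1 - ?W y))) \<le> Bg * r ^ N / (1 - r)" by simp
      qed
    qed
    have "(\<lambda>N. r ^ N) \<longlonglongrightarrow> 0" by (rule LIMSEQ_power_zero) (use r in simp)
    then show "(\<lambda>N. Bg * r ^ N / (1 - r)) \<longlonglongrightarrow> 0"
      by (intro tendsto_divide_zero tendsto_mult_right_zero)
  qed
  have "(\<lambda>N. ?I - ?E N) \<longlonglongrightarrow> ?I - 0" by (intro tendsto_intros E0)
  then show ?thesis unfolding sums_def P by simp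
qed


definition KK :: "real \<Rightarrow> int \<Rightarrow> real \<Rightarrow> real \<Rightarrow> complex" where
  "KK r s x y = 1/2 + WW r s x y / (1 - WW r s x y)"

lemma cont_KK [continuous_intros]: "0 \<le> r \<Longrightarrow> r < 1 \<Longrightarrow> continuous_on S (KK r s x)"
  unfolding KK_def[abs_def] using WW_ne1[of r s x] by (intro continuous_intros) auto

lemma kernel_identity:
  fixes g :: "real \<Rightarrow> complex"
  assumes cg: "continuous_on {0..1} g" and r: "0 \<le> r" "r < 1"
  shows "fcoeff g 0 / 2 + (\<Sum>k. fcoeff g (s * int (Suc k)) * ee (s * int (Suc k)) x * of_real r ^ Suc k)
       = integral {0..1} (\<lambda>y. g y * KK r s x y)"
proof -
  have ne: "1 - WW r s x y \<noteq> 0" for y using WW_ne1[OF r, of s x y] by simp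
  have S: "(\<Sum>k. fcoeff g (s * int (Suc k)) * ee (s * int (Suc k)) x * of_real r ^ Suc k)
      = integral {0..1} (\<lambda>y. g y * (WW r s x y / (1 - WW r s x y)))"
    using abel_sums[OF cg r] by (rule sums_unique[symmetric])
  have F: "fcoeff g 0 = integral {0..1} g" by (simp add: fcoeff_def ee_def)
  have "integral {0..1} (\<lambda>y. g y * KK r s x y)
      = integral {0..1} (\<lambda>y. g y / 2 + g y * (WW r s x y / (1 - WW r s x y)))"
    by (rule integral_cong) (simp add: KK_def distrib_left)
  also have "\<dots> = integral {0..1} (\<lambda>y. g y / 2) + integral {0..1} (\<lambda>y. g y * (WW r s x y / (1 - WW r s x y)))"
    by (rule integral_add) (auto intro!: integrable_continuous_interval continuous_intros cg simp: ne WW_ne1[OF r])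
  also have "integral {0..1} (\<lambda>y. g y / 2) = integral {0..1} g / 2" by (rule integral_divide)
  finally show ?thesis using S F by simp
qed

lemma kernel_half:
  assumes s: "s \<noteq> 0" and r: "0 \<le> r" "r < 1"
  shows "integral {0..1} (KK r s x) = 1/2"
proof -
  have z: "fcoeff (\<lambda>_. 1) (s * int (Suc k)) = 0" for k
    using integral_ee[of "- (s * int (Suc k))"] s by (simp add: fcoeff_def)
  have "(\<lambda>k. fcoeff (\<lambda>_. 1) (s * int (Suc k)) * ee (s * int (Suc k)) x * of_real r ^ Suc k) sums 0"
    unfolding z by simp
  from kernel_identity[of "\<lambda>_. 1" r s x] sums_unique[OF this] r
  have "fcoeff (\<lambda>_. 1) 0 / 2 = integral {0..1} (KK r s x)" by simp
  moreover have "fcoeff (\<lambda>_. 1) 0 = 1" by (simp add: fcoeff_def ee_def)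
  ultimately show ?thesis by simp
qed

lemma kern_alg:
  fixes r S C :: real
  assumes sc: "S^2 + C^2 = 1" and r: "0 \<le> r" "r < 1"
  defines "a \<equiv> r * (1 - 2 * S^2)" and "b \<equiv> 2 * r * S * C"
  shows "(1 - a)^2 + b^2 = (1 - r)^2 + 4 * r * S^2"
    and "\<bar>b\<bar> * \<bar>S\<bar> * 2 \<le> (1 - a)^2 + b^2"
    and "0 \<le> (1 - a)^2 + b^2 + 2 * (a * (1 - a) - b^2)"
proof -
  have C2: "C^2 = 1 - S^2" using sc by simp
  have ab: "a^2 + b^2 = r^2"
  proof -
    have "a^2 + b^2 = r^2 * ((1 - 2*S^2)^2 + 4*S^2*C^2)"
      unfolding a_def b_def by (simp add: power2_eq_square algebra_simps)
    also have "(1 - 2*S^2)^2 + 4*S^2*C^2 = 1"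
    proof -
      have "4*S^2*C^2 = 4*S^2*(1-S^2)" by (simp only: C2)
      then show ?thesis by (simp add: power2_eq_square algebra_simps)
    qed
    finally show ?thesis by simp
  qed
  have "(1 - a)^2 + b^2 = 1 - 2 * a + (a^2 + b^2)" by (simp add: power2_eq_square algebra_simps)
  also have "\<dots> = (1 - r)^2 + 4 * r * S^2" unfolding ab unfolding a_def by (simp add: power2_eq_square algebra_simps)
  finally show D: "(1 - a)^2 + b^2 = (1 - r)^2 + 4 * r * S^2" .
  have "C^2 \<le> 1" using C2 zero_le_power2[of S] by linarith
  then have "\<bar>C\<bar> \<le> 1" by (simp add: abs_square_le_1)
  then have "\<bar>b\<bar> * \<bar>S\<bar> * 2 = 4 * r * S^2 * \<bar>C\<bar>" unfolding b_def using r
    by (simp add: abs_mult power2_eq_square)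
  also have "\<dots> \<le> 4 * r * S^2" using \<open>\<bar>C\<bar> \<le> 1\<close> r by (simp add: mult_left_le)
  also have "\<dots> \<le> (1 - a)^2 + b^2" unfolding D by simp
  finally show "\<bar>b\<bar> * \<bar>S\<bar> * 2 \<le> (1 - a)^2 + b^2" .
  have "(1 - a)^2 + b^2 + 2 * (a * (1 - a) - b^2) = 1 - (a^2 + b^2)" by (simp add: algebra_simps power2_eq_square)
  also have "\<dots> = 1 - r^2" by (simp add: ab)
  finally show "0 \<le> (1 - a)^2 + b^2 + 2 * (a * (1 - a) - b^2)" using r
    by (simp add: abs_square_le_1)
qed


lemma KK_Re_Im:
  assumes s: "s = 1 \<or> s = -1" and r: "0 \<le> r" "r < 1"
  shows "0 \<le> Re (KK r s x y)" and "\<bar>Im (KK r s x y)\<bar> * \<bar>sin (pi * (x - y))\<bar> \<le> 1/2"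
proof -
  define \<psi> where "\<psi> = pi * of_int s * (x - y)"
  define S where "S = sin \<psi>"
  define C where "C = cos \<psi>"
  define a where "a = r * (1 - 2 * S^2)"
  define b where "b = 2 * r * S * C"
  have sc: "S^2 + C^2 = 1" by (simp add: S_def C_def)
  note ka = kern_alg[OF sc r, folded a_def b_def]
  have W: "WW r s x y = Complex a b"
  proof -
    have "WW r s x y = of_real r * cis (2 * \<psi>)" by (simp add: WW_def ee_cis \<psi>_def mult_ac)
    also have "\<dots> = Complex a b"
    proof (rule complex_eqI)
      have c2: "cos (2*\<psi>) = 1 - 2 * S^2" by (simp only: S_def cos_double_sin)
      have s2: "sin (2*\<psi>) = 2 * S * C" by (simp only: S_def C_def sin_double)
      show "Re (of_real r * cis (2 * \<psi>)) = Re (Complex a b)" using c2 by (simp add: a_def)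
      show "Im (of_real r * cis (2 * \<psi>)) = Im (Complex a b)" using s2 by (simp add: b_def)
    qed
    finally show ?thesis .
  qed
  define D where "D = (1 - a)^2 + b^2"
  have D: "D = (1 - r)^2 + 4 * r * S^2" using ka(1) by (simp add: D_def)
  have Dpos: "D > 0" unfolding D using r by (intro add_pos_nonneg) auto
  have ReK: "Re (KK r s x y) = 1/2 + (a * (1 - a) - b^2) / D"
    by (simp add: KK_def W Re_divide D_def power2_eq_square)
  have ImK: "Im (KK r s x y) = b / D"
    by (simp add: KK_def W Im_divide D_def power2_eq_square algebra_simps)
  have "Re (KK r s x y) = (D + 2 * (a * (1 - a) - b^2)) / (2 * D)"
    unfolding ReK using Dpos by (simp add: field_simps)
  then show "0 \<le> Re (KK r s x y)" using ka(3) Dpos by (simp add: D_def)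
  have sS: "\<bar>sin (pi * (x - y))\<bar> = \<bar>S\<bar>"
    using s by (auto simp: S_def \<psi>_def)
  have "\<bar>Im (KK r s x y)\<bar> * \<bar>sin (pi * (x - y))\<bar> = \<bar>b\<bar> * \<bar>S\<bar> / D"
    unfolding ImK sS using Dpos by simp
  also have "\<dots> \<le> 1/2" using ka(2) Dpos by (simp add: D_def field_simps)
  finally show "\<bar>Im (KK r s x y)\<bar> * \<bar>sin (pi * (x - y))\<bar> \<le> 1/2" .
qed


definition PP :: "real \<Rightarrow> real \<Rightarrow> real" where "PP \<eta> a = pi / (4 * max a \<eta>)"
definition QQ :: "real \<Rightarrow> real \<Rightarrow> real" where "QQ \<eta> a = pi / 4 * (min a \<eta> / \<eta> + ln (max a \<eta> / \<eta>))"

lemma QQ_deriv: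
  assumes e: "0 < \<eta>" and a: "0 < a" "a \<noteq> \<eta>"
  shows "(QQ \<eta> has_real_derivative PP \<eta> a) (at a)"
proof (cases "a < \<eta>")
  case True
  have "((\<lambda>b. pi / 4 * (b / \<eta>)) has_real_derivative PP \<eta> a) (at a)"
    using True e by (auto intro!: derivative_eq_intros simp: PP_def max_def)
  then show ?thesis
    by (rule has_field_derivative_transform_within_open[where S="{..<\<eta>}"])
       (use True in \<open>auto simp: QQ_def min_def max_def\<close>)
next
  case False
  then have a2: "\<eta> < a" using a by simp
  have "((\<lambda>b. pi / 4 * (1 + ln (b / \<eta>))) has_real_derivative PP \<eta> a) (at a)"
    using a2 e by (auto intro!: derivative_eq_intros simp: PP_def max_def field_simps)
  then show ?thesis
    by (rule has_field_derivative_transform_within_open[where S="{\<eta><..}"])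
       (use a2 e in \<open>auto simp: QQ_def min_def max_def\<close>)
qed

lemma cont_QQ: "0 < \<eta> \<Longrightarrow> continuous_on S (QQ \<eta>)"
  unfolding QQ_def[abs_def] by (intro continuous_intros) (auto simp: max_def)

lemma QQ_0: "0 < \<eta> \<Longrightarrow> QQ \<eta> 0 = 0" by (simp add: QQ_def)

lemma H_integral:
  assumes e: "0 < \<eta>" and x: "0 \<le> x" "x \<le> 1"
  shows "((\<lambda>y. PP \<eta> \<bar>x - y\<bar> + PP \<eta> (1 - \<bar>x - y\<bar>)) has_integral 2 * QQ \<eta> 1) {0..1}"
proof -
  have cQ: "continuous_on S (\<lambda>y. QQ \<eta> (f y))" if "continuous_on S f" for S f
    by (rule continuous_on_compose2[OF cont_QQ[OF e] that]) auto
  have I1: "((\<lambda>y. PP \<eta> (x - y) + PP \<eta> (1 - x + y)) has_integral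
        ((- QQ \<eta> (x - x) + QQ \<eta> (1 - x + x)) - (- QQ \<eta> (x - 0) + QQ \<eta> (1 - x + 0)))) {0..x}"
  proof (rule fundamental_theorem_of_calculus_interior_strong[where S="{x - \<eta>, x - 1 + \<eta>}"])
    show "continuous_on {0..x} (\<lambda>y. - QQ \<eta> (x - y) + QQ \<eta> (1 - x + y))"
      by (intro continuous_intros cQ)
    fix y assume y: "y \<in> {0<..<x} - {x - \<eta>, x - 1 + \<eta>}"
    have d1: "((\<lambda>y. QQ \<eta> (x - y)) has_real_derivative PP \<eta> (x - y) * (-1)) (at y)"
      by (rule DERIV_chain2[OF QQ_deriv[OF e]]) (use y in \<open>auto intro!: derivative_eq_intros\<close>)
    have d2: "((\<lambda>y. QQ \<eta> (1 - x + y)) has_real_derivative PP \<eta> (1 - x + y) * 1) (at y)"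
      by (rule DERIV_chain2[OF QQ_deriv[OF e]]) (use y x in \<open>auto intro!: derivative_eq_intros\<close>)
    have "((\<lambda>y. - QQ \<eta> (x - y) + QQ \<eta> (1 - x + y)) has_real_derivative
           PP \<eta> (x - y) + PP \<eta> (1 - x + y)) (at y)"
      using DERIV_add[OF DERIV_minus[OF d1] d2] by simp
    then show "((\<lambda>y. - QQ \<eta> (x - y) + QQ \<eta> (1 - x + y)) has_vector_derivative
           PP \<eta> (x - y) + PP \<eta> (1 - x + y)) (at y)"
      by (simp add: has_real_derivative_iff_has_vector_derivative)
  qed (use x in auto)
  have I2: "((\<lambda>y. PP \<eta> (y - x) + PP \<eta> (1 - y + x)) has_integral
        ((QQ \<eta> (1 - x) - QQ \<eta> (1 - 1 + x)) - (QQ \<eta> (x - x) - QQ \<eta> (1 - x + x)))) {x..1}"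
  proof (rule fundamental_theorem_of_calculus_interior_strong[where S="{x + \<eta>, x + 1 - \<eta>}"])
    show "continuous_on {x..1} (\<lambda>y. QQ \<eta> (y - x) - QQ \<eta> (1 - y + x))"
      by (intro continuous_intros cQ)
    fix y assume y: "y \<in> {x<..<1} - {x + \<eta>, x + 1 - \<eta>}"
    have d1: "((\<lambda>y. QQ \<eta> (y - x)) has_real_derivative PP \<eta> (y - x) * 1) (at y)"
      by (rule DERIV_chain2[OF QQ_deriv[OF e]]) (use y in \<open>auto intro!: derivative_eq_intros\<close>)
    have d2: "((\<lambda>y. QQ \<eta> (1 - y + x)) has_real_derivative PP \<eta> (1 - y + x) * (-1)) (at y)"
      by (rule DERIV_chain2[OF QQ_deriv[OF e]]) (use y x in \<open>auto intro!: derivative_eq_intros\<close>)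
    have "((\<lambda>y. QQ \<eta> (y - x) - QQ \<eta> (1 - y + x)) has_real_derivative
           PP \<eta> (y - x) + PP \<eta> (1 - y + x)) (at y)"
      using DERIV_diff[OF d1 d2] by simp
    then show "((\<lambda>y. QQ \<eta> (y - x) - QQ \<eta> (1 - y + x)) has_vector_derivative
           PP \<eta> (y - x) + PP \<eta> (1 - y + x)) (at y)"
      by (simp add: has_real_derivative_iff_has_vector_derivative)
  qed (use x in auto)
  have J1: "((\<lambda>y. PP \<eta> \<bar>x - y\<bar> + PP \<eta> (1 - \<bar>x - y\<bar>)) has_integral
        ((- QQ \<eta> (x - x) + QQ \<eta> (1 - x + x)) - (- QQ \<eta> (x - 0) + QQ \<eta> (1 - x + 0)))) {0..x}"
    by (rule has_integral_eq[OF _ I1]) (auto simp: algebra_simps)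
  have J2: "((\<lambda>y. PP \<eta> \<bar>x - y\<bar> + PP \<eta> (1 - \<bar>x - y\<bar>)) has_integral
        ((QQ \<eta> (1 - x) - QQ \<eta> (1 - 1 + x)) - (QQ \<eta> (x - x) - QQ \<eta> (1 - x + x)))) {x..1}"
    by (rule has_integral_eq[OF _ I2]) (auto simp: algebra_simps)
  from has_integral_combine[OF x J1 J2] show ?thesis by (simp add: QQ_0[OF e])
qed


lemma sin_min_bound:
  fixes x y :: real assumes "x \<in> {0..1}" "y \<in> {0..1}"
  shows "2 * min \<bar>x - y\<bar> (1 - \<bar>x - y\<bar>) \<le> \<bar>sin (pi * (x - y))\<bar>"
proof -
  define a where "a = \<bar>x - y\<bar>"
  have a: "0 \<le> a" "a \<le> 1" using assms by (auto simp: a_def)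
  have "\<bar>sin (pi * (x - y))\<bar> = \<bar>sin (pi * a)\<bar>"
  proof (cases "x \<le> y")
    case True
    then have "pi * (x - y) = - (pi * a)" by (simp add: a_def right_diff_distrib)
    then show ?thesis by (simp only: sin_minus abs_minus_cancel)
  next
    case False
    then have "pi * (x - y) = pi * a" by (simp add: a_def)
    then show ?thesis by simp
  qed
  also have "\<dots> = sin (pi * a)" using a by (intro abs_of_nonneg sin_ge_zero) auto
  finally have e: "\<bar>sin (pi * (x - y))\<bar> = sin (pi * a)" .
  show ?thesis
  proof (cases "a \<le> 1/2")
    case True
    then show ?thesis using jordan2[of a] a by (simp add: e a_def[symmetric])
  next
    case False
    have "sin (pi * a) = sin (pi * (1 - a))"
      by (simp add: right_diff_distrib sin_diff)
    then show ?thesis using jordan2[of "1 - a"] a False by (simp add: e a_def[symmetric])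
  qed
qed

context tp
begin

definition "K0 = max 1 (l1 / m)"
definition "L = 2 * pi * real_of_int n * K0"
definition "\<eta> = pi / L"
definition "\<theta> y = Im (g y)"

lemma K0_ge1: "K0 \<ge> 1" by (simp add: K0_def)
lemma L_ge: "L \<ge> 2 * pi"
proof -
  have "2 * pi * 1 * 1 \<le> 2 * pi * real_of_int n * K0"
    using n_ge1 K0_ge1 by (intro mult_mono) auto
  then show ?thesis by (simp add: L_def)
qed
lemma L_pos: "L > 0" using L_ge pi_gt_zero by linarith
lemma eta_pos: "\<eta> > 0" using L_pos by (simp add: \<eta>_def)

lemma lipL: "norm (g x - g y) \<le> L * \<bar>x - y\<bar>"
proof -
  have "2 * pi * n * l1 / m \<le> L"
  proof -
    have "l1 / m \<le> K0" by (simp add: K0_def)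
    then have "2 * pi * n * (l1 / m) \<le> 2 * pi * n * K0" using n_ge1 by (intro mult_left_mono) auto
    then show ?thesis by (simp add: L_def)
  qed
  then have "(2 * pi * n * l1 / m) * \<bar>x - y\<bar> \<le> L * \<bar>x - y\<bar>" by (intro mult_right_mono) auto
  with tp_lip[OF tp_axioms, of x y] show ?thesis by (simp add: g_def)
qed

lemma theta_lip: "\<bar>\<theta> x - \<theta> y\<bar> \<le> L * \<bar>x - y\<bar>"
  using lipL[of x y] abs_Im_le_cmod[of "g x - g y"] by (simp add: \<theta>_def)

lemma theta_small: "\<bar>\<theta> y\<bar> < pi / 2"
  unfolding \<theta>_def g_def by (rule Re_Ln_pos_lt_imp) (rule posT)

lemma theta_period: "\<theta> (y + of_int k) = \<theta> y" by (simp add: \<theta>_def g_period)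

lemma delta_bound:
  assumes "x \<in> {0..1}" "y \<in> {0..1}"
  shows "\<bar>\<theta> x - \<theta> y\<bar> \<le> L * min \<bar>x - y\<bar> (1 - \<bar>x - y\<bar>)"
proof -
  have "\<bar>\<theta> x - \<theta> y\<bar> \<le> L * (1 - \<bar>x - y\<bar>)"
  proof (cases "y \<le> x")
    case True
    have "\<theta> y = \<theta> (y + of_int 1)" by (rule theta_period[symmetric])
    then have "\<bar>\<theta> x - \<theta> y\<bar> \<le> L * \<bar>x - (y + 1)\<bar>" using theta_lip[of x "y + 1"] by simp
    moreover have "\<bar>x - (y + 1)\<bar> = 1 - \<bar>x - y\<bar>" using True assms by simp
    ultimately show ?thesis by simp
  next
    case False
    have "\<theta> x = \<theta> (x + of_int 1)" by (rule theta_period[symmetric])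
    then have "\<bar>\<theta> x - \<theta> y\<bar> \<le> L * \<bar>(x + 1) - y\<bar>" using theta_lip[of "x + 1" y] by simp
    moreover have "\<bar>(x + 1) - y\<bar> = 1 - \<bar>x - y\<bar>" using False assms by simp
    ultimately show ?thesis by simp
  qed
  then show ?thesis using theta_lip[of x y] by (simp add: min_def)
qed

lemma pointwise_H:
  assumes x: "x \<in> {0..1}" and y: "y \<in> {0..1}" and s: "s = 1 \<or> s = -1" and r: "0 \<le> r" "r < 1"
  shows "\<bar>\<theta> x - \<theta> y\<bar> * \<bar>Im (KK r s x y)\<bar> \<le> PP \<eta> \<bar>x - y\<bar> + PP \<eta> (1 - \<bar>x - y\<bar>)"
proof -
  define a where "a = \<bar>x - y\<bar>"
  define D0 where "D0 = min a (1 - a)"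
  define k where "k = \<bar>Im (KK r s x y)\<bar>"
  define \<delta> where "\<delta> = \<bar>\<theta> x - \<theta> y\<bar>"
  have a: "0 \<le> a" "a \<le> 1" using x y by (auto simp: a_def)
  have D0: "0 \<le> D0" using a by (simp add: D0_def)
  have k0: "0 \<le> k" by (simp add: k_def)
  have kD: "k * D0 \<le> 1/4"
  proof -
    have "k * (2 * D0) \<le> k * \<bar>sin (pi * (x - y))\<bar>"
      using sin_min_bound[OF x y] k0 by (intro mult_left_mono) (auto simp: D0_def a_def)
    also have "\<dots> \<le> 1/2" using KK_Re_Im(2)[OF s r, of x y] by (simp add: k_def)
    finally show ?thesis by simp
  qed
  have dpi: "\<delta> \<le> pi" using theta_small[of x] theta_small[of y] by (simp add: \<delta>_def)
  have dL: "\<delta> \<le> L * D0" using delta_bound[OF x y] by (simp add: \<delta>_def D0_def a_def)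
  have main: "\<delta> * k \<le> pi / (4 * max D0 \<eta>)"
  proof (cases "\<eta> \<le> D0")
    case True
    then have D0p: "D0 > 0" using eta_pos by linarith
    have "\<delta> * k \<le> pi * k" using dpi k0 by (intro mult_right_mono) auto
    also have "\<dots> \<le> pi / (4 * D0)" using kD D0p by (simp add: field_simps)
    finally show ?thesis using True by (simp add: max_def)
  next
    case False
    have "\<delta> * k \<le> (L * D0) * k" using dL k0 by (intro mult_right_mono) auto
    also have "\<dots> = L * (k * D0)" by simp
    also have "\<dots> \<le> L * (1/4)" using kD L_pos by (intro mult_left_mono) auto
    also have "\<dots> = pi / (4 * \<eta>)" using L_pos by (simp add: \<eta>_def)
    finally show ?thesis using False by (simp add: max_def)
  qed
  have PP0: "0 \<le> PP \<eta> b" for b using eta_pos by (simp add: PP_def max_def)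
  have "pi / (4 * max D0 \<eta>) \<le> PP \<eta> a + PP \<eta> (1 - a)"
  proof (cases "a \<le> 1 - a")
    case True then show ?thesis using PP0[of "1 - a"] by (simp add: D0_def PP_def)
  next
    case False then show ?thesis using PP0[of a] by (simp add: D0_def PP_def)
  qed
  with main show ?thesis by (simp add: \<delta>_def k_def a_def)
qed

end


context tp
begin

lemma Re_g_le: "Re (g y) \<le> ln M"
proof -
  have nz: "TT c (of_real y) \<noteq> 0" by (rule TT_nz)
  have "Re (g y) = ln (norm (TT c (of_real y)))" by (simp add: g_def nz)
  also have "\<dots> \<le> ln M"
    using M_ge[of y] nz M_pos by (subst ln_le_cancel_iff) (auto simp: trig_eval_TT)
  finally show ?thesis .
qed

lemma Re_bound:
  assumes x: "x \<in> {0..1}" and s: "s = 1 \<or> s = -1" and r: "0 \<le> r" "r < 1"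
  shows "Re (integral {0..1} (\<lambda>y. g y * KK r s x y)) \<le> ln M / 2 + 2 * QQ \<eta> 1"
proof -
  define \<kappa> where "\<kappa> = Complex (ln M) (\<theta> x)"
  have Ig: "((\<lambda>y. g y * KK r s x y) has_integral integral {0..1} (\<lambda>y. g y * KK r s x y)) {0..1}"
    by (intro integrable_integral integrable_continuous_interval continuous_intros cont_g r)
  have s0: "s \<noteq> 0" using s by auto
  have IK: "(KK r s x has_integral 1/2) {0..1}"
  proof -
    have "(KK r s x has_integral integral {0..1} (KK r s x)) {0..1}"
      by (rule integrable_integral[OF integrable_continuous_interval[OF cont_KK[OF r]]])
    then show ?thesis unfolding kernel_half[OF s0 r, of x] .
  qed
  have I2: "((\<lambda>y. Re (\<kappa> * KK r s x y) + (PP \<eta> \<bar>x - y\<bar> + PP \<eta> (1 - \<bar>x - y\<bar>))) has_integral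
              (Re (\<kappa> * (1/2)) + 2 * QQ \<eta> 1)) {0..1}"
    using x by (intro has_integral_add has_integral_Re has_integral_mult_right IK H_integral eta_pos) auto
  have "Re (integral {0..1} (\<lambda>y. g y * KK r s x y)) \<le> Re (\<kappa> * (1/2)) + 2 * QQ \<eta> 1"
  proof (rule has_integral_le[OF has_integral_Re[OF Ig] I2])
    fix y :: real assume y: "y \<in> {0..1}"
    let ?K = "KK r s x y"
    have ReK: "0 \<le> Re ?K" by (rule KK_Re_Im(1)[OF s r])
    have e1: "Re (g y * ?K) = Re (g y) * Re ?K - \<theta> y * Im ?K" by (simp add: \<theta>_def)
    have e2: "Re (\<kappa> * ?K) = ln M * Re ?K - \<theta> x * Im ?K" by (simp add: \<kappa>_def)
    have t1: "Re (g y) * Re ?K \<le> ln M * Re ?K" using Re_g_le ReK by (rule mult_right_mono)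
    have t2: "(\<theta> x - \<theta> y) * Im ?K \<le> \<bar>\<theta> x - \<theta> y\<bar> * \<bar>Im ?K\<bar>"
      by (metis abs_ge_self abs_mult)
    have t3: "\<bar>\<theta> x - \<theta> y\<bar> * \<bar>Im ?K\<bar> \<le> PP \<eta> \<bar>x - y\<bar> + PP \<eta> (1 - \<bar>x - y\<bar>)"
      by (rule pointwise_H[OF x y s r])
    show "Re (g y * ?K) \<le> Re (\<kappa> * ?K) + (PP \<eta> \<bar>x - y\<bar> + PP \<eta> (1 - \<bar>x - y\<bar>))"
      unfolding e1 e2 using t1 t2 t3 by (simp add: algebra_simps)
  qed
  also have "Re (\<kappa> * (1/2)) = ln M / 2" by (simp add: \<kappa>_def)
  finally show ?thesis .
qed

end


context tp
begin

lemma coeff_decay: "\<exists>C. \<forall>j. j \<noteq> 0 \<longrightarrow> norm (fcoeff g j) \<le> C / (of_int j)^2"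
proof -
  obtain B2 where B2: "\<And>y. y \<in> {0..1} \<Longrightarrow> norm (g2 y) \<le> B2"
    using compact_imp_bounded[OF compact_continuous_image[OF cont_g2 compact_Icc]]
    unfolding bounded_iff by (metis atLeastAtMost_iff image_eqI)
  have p0: "g 1 = g 0" using g_period[of 0 1] by simp
  have p1: "g1 1 = g1 0" using g1_period[of 0 1] by simp
  have d0: "\<And>x. (g has_vector_derivative g1 x) (at x)" by (rule g_deriv)
  have d1: "\<And>x. (g1 has_vector_derivative g2 x) (at x)" by (rule g1_deriv)
  show ?thesis
  proof (rule exI[of _ "B2 / (4 * pi^2)"], intro allI impI)
    fix j :: int assume j: "j \<noteq> 0"
    let ?a = "2 * pi * \<i> * of_int j :: complex"
    have "fcoeff g2 j = ?a * fcoeff g1 j" by (rule fcoeff_deriv[OF d1 cont_g2 p1])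
    also have "fcoeff g1 j = ?a * fcoeff g j" by (rule fcoeff_deriv[OF d0 cont_g1 p0])
    finally have "fcoeff g2 j = ?a^2 * fcoeff g j" by (simp add: power2_eq_square)
    then have "norm (fcoeff g2 j) = (4 * pi^2 * (of_int j)^2) * norm (fcoeff g j)"
      by (simp add: norm_mult norm_power power_mult_distrib)
    moreover have "norm (fcoeff g2 j) \<le> B2" by (rule fcoeff_bound[OF cont_g2 B2])
    ultimately have "(4 * pi^2 * (of_int j)^2) * norm (fcoeff g j) \<le> B2" by simp
    moreover have "0 < 4 * pi^2 * (of_int j :: real)^2" using j by simp
    ultimately show "norm (fcoeff g j) \<le> B2 / (4 * pi^2) / (of_int j)^2"
      by (simp add: field_simps)
  qed
qed

lemma A_bound:
  assumes x: "x \<in> {0..1}"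
  shows "Re (A_inf s (\<lambda>y. Ln (trig_eval c y)) x) \<le> ln M / 2 + 2 * QQ \<eta> 1"
proof -
  define \<sigma> :: int where "\<sigma> = (if s then 1 else -1)"
  have \<sigma>: "\<sigma> = 1 \<or> \<sigma> = -1" by (simp add: \<sigma>_def)
  have gg: "(\<lambda>y. Ln (trig_eval c y)) = g" by (simp add: g_def[abs_def] trig_eval_TT)
  obtain C where C: "\<And>j. j \<noteq> 0 \<Longrightarrow> norm (fcoeff g j) \<le> C / (of_int j)^2"
    using coeff_decay by blast
  define f where "f = (\<lambda>k (r::real). fcoeff g (\<sigma> * int (Suc k)) * ee (\<sigma> * int (Suc k)) x * of_real r ^ Suc k)"
  define U where "U = (\<lambda>r. \<Sum>k. f k r)"
  have fb: "norm (f k r) \<le> C / real (Suc k)^2" if "r \<in> {0..1}" for k r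
  proof -
    have j: "\<sigma> * int (Suc k) \<noteq> 0" using \<sigma> by auto
    have sq: "(of_int (\<sigma> * int (Suc k)) :: real)^2 = real (Suc k)^2" using \<sigma> by (auto simp: power2_eq_square algebra_simps)
    have "norm (f k r) = norm (fcoeff g (\<sigma> * int (Suc k))) * r ^ Suc k"
      using that by (simp add: f_def norm_mult norm_power)
    also have "\<dots> \<le> norm (fcoeff g (\<sigma> * int (Suc k))) * 1"
      using that by (intro mult_left_mono power_le_one) auto
    also have "\<dots> \<le> C / real (Suc k)^2" using C[OF j] sq by simp
    finally show ?thesis .
  qed
  have summ: "summable (\<lambda>k. C / real (Suc k)^2)"
  proof -
    have "summable (\<lambda>k. inverse (real k ^ 2))" by (rule inverse_power_summable) simp
    then have "summable (\<lambda>k. inverse (real (Suc k) ^ 2))" by (subst summable_Suc_iff)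
    then have "summable (\<lambda>k. C * inverse (real (Suc k) ^ 2))" by (rule summable_mult)
    then show ?thesis by (simp add: divide_inverse)
  qed
  have ul: "uniform_limit {0..1} (\<lambda>N r. \<Sum>i<N. f i r) U sequentially"
    unfolding U_def by (rule Weierstrass_m_test[OF fb summ])
  have cU: "continuous_on {0..1} U"
    by (rule uniform_limit_theorem[OF _ ul]) (auto intro!: always_eventually continuous_intros simp: f_def)
  define rr where "rr = (\<lambda>N::nat. 1 - inverse (real (Suc N)) / 2)"
  have rr: "0 \<le> rr N" "rr N < 1" for N
  proof -
    have "inverse (real (Suc N)) \<le> 1" by (simp add: inverse_le_1_iff)
    moreover have "0 < inverse (real (Suc N))" by simp
    ultimately show "0 \<le> rr N" "rr N < 1" by (auto simp: rr_def)
  qed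
  have rr1: "rr \<longlonglongrightarrow> 1"
  proof -
    have "(\<lambda>N. 1 - inverse (real (Suc N)) / 2) \<longlonglongrightarrow> 1 - 0 / 2"
      by (intro tendsto_intros LIMSEQ_inverse_real_of_nat) simp
    then show ?thesis by (simp add: rr_def)
  qed
  have lim: "(\<lambda>N. U (rr N)) \<longlonglongrightarrow> U 1"
    by (rule continuous_on_tendsto_compose[OF cU rr1]) (use rr in \<open>auto intro!: always_eventually less_imp_le\<close>)
  define Bd where "Bd = ln M / 2 + 2 * QQ \<eta> 1"
  have bnd: "Re (fcoeff g 0 / 2 + U (rr N)) \<le> Bd" for N
  proof -
    have "fcoeff g 0 / 2 + U (rr N) = integral {0..1} (\<lambda>y. g y * KK (rr N) \<sigma> x y)"
      unfolding U_def f_def by (rule kernel_identity[OF cont_g rr])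
    then show ?thesis using Re_bound[OF x \<sigma> rr] by (simp add: Bd_def)
  qed
  have "(\<lambda>N. Re (fcoeff g 0 / 2 + U (rr N))) \<longlonglongrightarrow> Re (fcoeff g 0 / 2 + U 1)"
    by (intro tendsto_intros lim)
  then have "Re (fcoeff g 0 / 2 + U 1) \<le> Bd"
    by (rule LIMSEQ_le_const2) (use bnd in auto)
  moreover have "A_inf s (\<lambda>y. Ln (trig_eval c y)) x = fcoeff g 0 / 2 + U 1"
    unfolding gg A_inf_def U_def f_def \<sigma>_def by (simp add: Let_def)
  ultimately show ?thesis by (simp add: Bd_def)
qed

end


context tp
begin

lemma Psi_bound:
  assumes x: "x \<in> {0..1}"
  shows "norm (Psi s c x) \<le> sqrt M * exp (pi/2) * (2 * real_of_int n * K0) powr (pi/2)"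
proof -
  have L2: "L / pi = 2 * real_of_int n * K0" by (simp add: L_def)
  have pos2: "0 < 2 * real_of_int n * K0" using n_ge1 K0_ge1 by simp
  have e1: "\<eta> \<le> 1"
  proof -
    have "\<eta> = pi / L" by (simp add: \<eta>_def)
    also have "\<dots> \<le> pi / (2 * pi)" using L_ge L_pos by (intro divide_left_mono) auto
    finally show ?thesis by simp
  qed
  have Q1: "2 * QQ \<eta> 1 = pi / 2 + pi / 2 * ln (2 * real_of_int n * K0)"
  proof -
    have "QQ \<eta> 1 = pi / 4 * (1 + ln (1 / \<eta>))"
      using e1 eta_pos by (simp add: QQ_def min_def max_def)
    also have "1 / \<eta> = 2 * real_of_int n * K0" using L2 by (simp add: \<eta>_def)
    finally show ?thesis by (simp add: algebra_simps)
  qed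
  have "norm (Psi s c x) = exp (Re (A_inf s (\<lambda>y. Ln (trig_eval c y)) x))"
    by (simp add: Psi_def)
  also have "\<dots> \<le> exp (ln M / 2 + 2 * QQ \<eta> 1)" using A_bound[OF x, of s] by simp
  also have "\<dots> = exp (ln M / 2) * exp (pi/2) * exp (pi / 2 * ln (2 * real_of_int n * K0))"
    unfolding Q1 by (simp add: exp_add)
  also have "exp (ln M / 2) = sqrt M"
    using M_pos by (simp add: powr_half_sqrt[symmetric] powr_def)
  also have "exp (pi / 2 * ln (2 * real_of_int n * K0)) = (2 * real_of_int n * K0) powr (pi/2)"
    using pos2 n_ge1 K0_ge1 by (simp add: powr_def mult_ac)
  finally show ?thesis .
qed

lemma M_le_tau: "M \<le> exp (tau c)"
proof -
  have "ln M \<le> ln (M + m / 2)" using M_pos m_pos by simp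
  also have "\<dots> \<le> tau c" by (simp add: tau_def M_def[symmetric] m_def[symmetric])
  finally have "exp (ln M) \<le> exp (tau c)" by simp
  then show ?thesis using M_pos by simp
qed

lemma K0_le: "K0 \<le> max 1 (1 / (2 * exp 1 * rho c))"
proof (cases "m / (2 * exp 1 * l1) \<le> 1")
  case True
  then have "rho c = m / (2 * exp 1 * l1)"
    by (simp add: rho_def min_def m_def[symmetric] l1_def[symmetric])
  then have "1 / (2 * exp 1 * rho c) = l1 / m" using m_pos l1_pos by simp
  then show ?thesis by (simp add: K0_def)
next
  case False
  have "1 \<le> exp (1::real)" by simp
  then have e2: "1 \<le> 2 * exp (1::real)" by linarith
  have "1 * l1 \<le> (2 * exp 1) * l1" using l1_pos e2 by (intro mult_right_mono) auto
  then have "l1 \<le> 2 * exp 1 * l1" by simp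
  moreover have "2 * exp 1 * l1 < m" using False m_pos l1_pos by (simp add: field_simps)
  ultimately have "l1 / m \<le> 1" using m_pos by simp
  then have "K0 = 1" by (simp add: K0_def)
  then show ?thesis by simp
qed

end

theorem theorem2:
  shows "\<exists>lam :: real \<Rightarrow> real \<Rightarrow> real.
    (\<forall>a b. a > 0 \<and> b > 0 \<longrightarrow> lam a b > 0) \<and>
    (\<forall>c s. is_trig_poly c \<and> nonconstant c \<and> (\<forall>x. Re (trig_eval c x) > 0) \<longrightarrow>
       sup_norm (Psi s c) \<le> lam (rho c) (tau c) * real_of_int (n_deg c) powr (pi / 2))"
proof (rule exI[of _ "\<lambda>a b. sqrt (exp b) * exp (pi/2) * (2 * max 1 (1 / (2 * exp 1 * a))) powr (pi/2)"],
       intro conjI allI impI)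
  fix a b :: real assume "0 < a \<and> 0 < b"
  show "0 < sqrt (exp b) * exp (pi/2) * (2 * max 1 (1 / (2 * exp 1 * a))) powr (pi/2)"
    by simp
next
  fix c s assume H: "is_trig_poly c \<and> nonconstant c \<and> (\<forall>x. Re (trig_eval c x) > 0)"
  then interpret tp c by unfold_locales (auto simp: is_trig_poly_def)
  define K' where "K' = max 1 (1 / (2 * exp 1 * rho c))"
  have nn: "real_of_int (n_deg c) = real_of_int n" by (simp add: n_def)
  have n0: "0 \<le> real_of_int n" using n_ge1 by simp
  have bound: "norm (Psi s c x) \<le> sqrt (exp (tau c)) * exp (pi/2) * (2 * K') powr (pi/2) * real_of_int n powr (pi/2)"
    if x: "x \<in> {0..1}" for x
  proof -
    have "norm (Psi s c x) \<le> sqrt M * exp (pi/2) * (2 * real_of_int n * K0) powr (pi/2)"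
      by (rule Psi_bound[OF x])
    also have "(2 * real_of_int n * K0) powr (pi/2) = (2 * K0) powr (pi/2) * real_of_int n powr (pi/2)"
      using n0 K0_ge1 by (simp add: powr_mult[symmetric] mult_ac)
    also have "sqrt M * exp (pi/2) * ((2 * K0) powr (pi/2) * real_of_int n powr (pi/2))
        \<le> sqrt (exp (tau c)) * exp (pi/2) * ((2 * K') powr (pi/2) * real_of_int n powr (pi/2))"
    proof (rule mult_mono)
      show "sqrt M * exp (pi/2) \<le> sqrt (exp (tau c)) * exp (pi/2)"
        using real_sqrt_le_mono[OF M_le_tau] by simp
      have a2: "(2 * K0) powr (pi/2) \<le> (2 * K') powr (pi/2)"
        by (rule powr_mono2) (use K0_le K0_ge1 in \<open>auto simp: K'_def\<close>)
      show "(2 * K0) powr (pi/2) * real_of_int n powr (pi/2) \<le> (2 * K') powr (pi/2) * real_of_int n powr (pi/2)"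
        by (rule mult_right_mono[OF a2]) simp
    qed auto
    finally show ?thesis by (simp add: mult_ac)
  qed
  have "sup_norm (Psi s c) \<le> sqrt (exp (tau c)) * exp (pi/2) * (2 * K') powr (pi/2) * real_of_int n powr (pi/2)"
    unfolding sup_norm_def by (rule cSUP_least) (use bound in auto)
  then show "sup_norm (Psi s c) \<le> sqrt (exp (tau c)) * exp (pi/2) * (2 * max 1 (1 / (2 * exp 1 * rho c))) powr (pi/2)
      * real_of_int (n_deg c) powr (pi / 2)"
    by (simp add: K'_def nn)
qed

end
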